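(* Let $T_1=\{12|3456,\,123|456,\,1234|56\}$, $T_2=\{13|2456,\,123|456,\,1235|46\}$, $T_3=\{13|2456,\,123|456,\,1234|56\}$, $T_4=\{12|3456,\,123|456,\,1235|46\}$ be binary trees on leaves $\{1,\dots,6\}$, and let $f=q_{GGGGGG}+q_{GTTTTG}-q_{GTGGTG}-q_{GGTTGG}$. Then for the JC model and for the K2P model, $f\in\mathcal{I}(V_{T_1}\ast V_{T_2})\setminus\mathcal{I}(V_{T_i})$ for $i\in\{3,4\}$. In particular $V_{T_i}\not\subseteq V_{T_1}\ast V_{T_2}$ for $i\in\{3,4\}$.
   Context: Trees are unrooted binary trees described by their nontrivial splits; $\Sigma(T)$ is the set of all splits of $T$ including trivial ones $\{i\}|[6]\setminus\{i\}$. With $G=\mathbb{Z}_2\times\mathbb{Z}_2$ and $A=(0,0)$, $C=(0,1)$, $G=(1,0)$, $T=(1,1)$, the K3P model on $T$ in Fourier coordinates $q_{g_1\cdots g_6}$ is $q_{g_1\cdots g_6}=\prod_{A|B\in\Sigma(T)}a^{A|B}_{\sum_{i\in A}g_i}$ if $\sum g_i=0$ and $0$ otherwise; K2P imposes $a^e_G=a^e_T$, JC imposes $a^e_C=a^e_G=a^e_T$ for all splits $e$. $V_T$ is the Zariski closure in $\mathbb{P}^{4^6-1}$ of the image for complex parameters; $V\ast W$ is the join (closure of the union of lines meeting $V$ and $W$); $\mathcal{I}(V)$ is the ideal of polynomials vanishing on $V$. *)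

theory Defs
  imports Complex_Main "HOL-Library.Z2" "HOL-Library.Product_Plus"
begin

type_synonym grp = "bit \<times> bit"

definition nA :: grp where "nA = (0, 0)"
definition nC :: grp where "nC = (0, 1)"
definition nG :: grp where "nG = (1, 0)"
definition nT :: grp where "nT = (1, 1)"

text \<open>Leaves are 1..6. A Fourier index g_1...g_6 is a list w of length 6,
  with g_i = w ! (i - 1). Points of C^(4^6) are functions from indices to complex
  numbers (values at lists of length other than 6 are irrelevant).\<close>
definition leaves :: "nat set" where "leaves = {1..6}"

type_synonym word = "grp list"
type_synonym point = "word \<Rightarrow> complex"

definition gsum :: "word \<Rightarrow> nat set \<Rightarrow> grp" where
  "gsum w A = (\<Sum>i\<in>A. w ! (i - 1))"

text \<open>A tree is given by its set of nontrivial splits, each split A|B recorded by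
  the side A. Sigma(T) adds the trivial splits {i}|[6]-{i}.\<close>
definition Sigma_splits :: "nat set set \<Rightarrow> nat set set" where
  "Sigma_splits T = T \<union> {{i} | i. i \<in> leaves}"

datatype model = JC | K2P | K3P

definition params_ok :: "model \<Rightarrow> (nat set \<Rightarrow> grp \<Rightarrow> complex) \<Rightarrow> bool" where
  "params_ok M a = (case M of
      K3P \<Rightarrow> True
    | K2P \<Rightarrow> (\<forall>e. a e nG = a e nT)
    | JC \<Rightarrow> (\<forall>e. a e nC = a e nG \<and> a e nG = a e nT))"

definition qmap :: "nat set set \<Rightarrow> (nat set \<Rightarrow> grp \<Rightarrow> complex) \<Rightarrow> point" where
  "qmap T a = (\<lambda>w. if length w = 6 \<and> gsum w leaves = 0
                     then (\<Prod>A\<in>Sigma_splits T. a A (gsum w A)) else 0)"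

definition param_image :: "model \<Rightarrow> nat set set \<Rightarrow> point set" where
  "param_image M T = {qmap T a | a. params_ok M a}"

inductive_set polyfun :: "(point \<Rightarrow> complex) set" where
  pf_const: "(\<lambda>x. c) \<in> polyfun"
| pf_var: "length w = 6 \<Longrightarrow> (\<lambda>x. x w) \<in> polyfun"
| pf_add: "p \<in> polyfun \<Longrightarrow> r \<in> polyfun \<Longrightarrow> (\<lambda>x. p x + r x) \<in> polyfun"
| pf_mult: "p \<in> polyfun \<Longrightarrow> r \<in> polyfun \<Longrightarrow> (\<lambda>x. p x * r x) \<in> polyfun"

definition vanish_ideal :: "point set \<Rightarrow> (point \<Rightarrow> complex) set" where
  "vanish_ideal S = {p \<in> polyfun. \<forall>x\<in>S. p x = 0}"

definition zcl :: "point set \<Rightarrow> point set" where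
  "zcl S = {x. \<forall>p\<in>vanish_ideal S. p x = 0}"

text \<open>Projective varieties are represented by their affine cones.
  V_T: affine cone = Zariski closure of the (conical) parametrization image.\<close>
definition V :: "model \<Rightarrow> nat set set \<Rightarrow> point set" where
  "V M T = zcl (param_image M T)"

text \<open>Join: affine cone over the closure of the union of lines joining V and W.\<close>
definition join :: "point set \<Rightarrow> point set \<Rightarrow> point set" where
  "join S1 S2 = zcl {(\<lambda>w. x w + y w) | x y. x \<in> S1 \<and> y \<in> S2}"

definition T1 :: "nat set set" where "T1 = {{1,2}, {1,2,3}, {1,2,3,4}}"
definition T2 :: "nat set set" where "T2 = {{1,3}, {1,2,3}, {1,2,3,5}}"
definition T3 :: "nat set set" where "T3 = {{1,3}, {1,2,3}, {1,2,3,4}}"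
definition T4 :: "nat set set" where "T4 = {{1,2}, {1,2,3}, {1,2,3,5}}"

definition fpoly :: "point \<Rightarrow> complex" where
  "fpoly x = x [nG,nG,nG,nG,nG,nG] + x [nG,nT,nT,nT,nT,nG]
             - x [nG,nT,nG,nG,nT,nG] - x [nG,nG,nT,nT,nG,nG]"

end

theory Submission
  imports Defs
begin

lemma lv: "leaves = {1,2,3,4,5,6}" unfolding leaves_def by auto

lemma ne_aux: "(\<And>A B :: nat set. A = B \<Longrightarrow> False) \<Longrightarrow> True" by simp

lemma sig1: "Sigma_splits T1 = {{1,2},{1,2,3},{1,2,3,4},{1},{2},{3},{4},{5},{6}}"
  unfolding Sigma_splits_def T1_def leaves_def by (auto simp: atLeastAtMost_def; presburger?)
lemma sig2: "Sigma_splits T2 = {{1,3},{1,2,3},{1,2,3,5},{1},{2},{3},{4},{5},{6}}"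
  unfolding Sigma_splits_def T2_def leaves_def by (auto simp: atLeastAtMost_def; presburger?)
lemma sig3: "Sigma_splits T3 = {{1,3},{1,2,3},{1,2,3,4},{1},{2},{3},{4},{5},{6}}"
  unfolding Sigma_splits_def T3_def leaves_def by (auto simp: atLeastAtMost_def; presburger?)
lemma sig4: "Sigma_splits T4 = {{1,2},{1,2,3},{1,2,3,5},{1},{2},{3},{4},{5},{6}}"
  unfolding Sigma_splits_def T4_def leaves_def by (auto simp: atLeastAtMost_def; presburger?)

lemma p1: "(\<Prod>A\<in>Sigma_splits T1. f A) = f {1,2} * f {1,2,3} * f {1,2,3,4} * f {1} * f {2} * f {3} * f {4} * f {5} * f {6}"
  unfolding sig1
  apply (subst prod.insert, simp, (simp; (intro conjI notI; drule arg_cong[where f=card]; simp)?))+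
  by (simp add: mult.assoc)
lemma p2: "(\<Prod>A\<in>Sigma_splits T2. f A) = f {1,3} * f {1,2,3} * f {1,2,3,5} * f {1} * f {2} * f {3} * f {4} * f {5} * f {6}"
  unfolding sig2
  apply (subst prod.insert, simp, (simp; (intro conjI notI; drule arg_cong[where f=card]; simp)?))+
  by (simp add: mult.assoc)
lemma p3: "(\<Prod>A\<in>Sigma_splits T3. f A) = f {1,3} * f {1,2,3} * f {1,2,3,4} * f {1} * f {2} * f {3} * f {4} * f {5} * f {6}"
  unfolding sig3
  apply (subst prod.insert, simp, (simp; (intro conjI notI; drule arg_cong[where f=card]; simp)?))+
  by (simp add: mult.assoc)
lemma p4: "(\<Prod>A\<in>Sigma_splits T4. f A) = f {1,2} * f {1,2,3} * f {1,2,3,5} * f {1} * f {2} * f {3} * f {4} * f {5} * f {6}"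
  unfolding sig4
  apply (subst prod.insert, simp, (simp; (intro conjI notI; drule arg_cong[where f=card]; simp)?))+
  by (simp add: mult.assoc)

lemma gs:
  "gsum [x1,x2,x3,x4,x5,x6] {1,2} = x1+x2"
  "gsum [x1,x2,x3,x4,x5,x6] {1,3} = x1+x3"
  "gsum [x1,x2,x3,x4,x5,x6] {1,2,3} = x1+x2+x3"
  "gsum [x1,x2,x3,x4,x5,x6] {1,2,3,4} = x1+x2+x3+x4"
  "gsum [x1,x2,x3,x4,x5,x6] {1,2,3,5} = x1+x2+x3+x5"
  "gsum [x1,x2,x3,x4,x5,x6] {1} = x1"
  "gsum [x1,x2,x3,x4,x5,x6] {2} = x2"
  "gsum [x1,x2,x3,x4,x5,x6] {3} = x3"
  "gsum [x1,x2,x3,x4,x5,x6] {4} = x4"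
  "gsum [x1,x2,x3,x4,x5,x6] {5} = x5"
  "gsum [x1,x2,x3,x4,x5,x6] {6} = x6"
  "gsum [x1,x2,x3,x4,x5,x6] leaves = x1+x2+x3+x4+x5+x6"
  by (simp_all add: gsum_def lv add.assoc)

lemma ar:
  "nG + nG = nA" "nT + nT = nA" "nG + nT = nC" "nT + nG = nC"
  "nA + x = x" "x + nA = x" "nC + nG = nT" "nC + nT = nG" "nG + nC = nT" "nT + nC = nG"
  "nC + nC = nA" "nA = 0"
  by (simp_all add: nA_def nC_def nG_def nT_def zero_prod_def)

lemma dist: "nG \<noteq> nA" "nT \<noteq> nA" "nC \<noteq> nA" "nG \<noteq> 0" "nT \<noteq> 0" "nC \<noteq> 0"
  by (simp_all add: nA_def nC_def nG_def nT_def zero_prod_def)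

lemma fvan1: assumes "params_ok K2P a" shows "fpoly (qmap T1 a) = 0"
proof -
  have h: "\<And>e. a e nT = a e nG" using assms by (simp add: params_ok_def)
  show ?thesis by (simp add: fpoly_def qmap_def p1 gsum_def lv ar h add.assoc[symmetric])
qed

lemma fvan2: assumes "params_ok K2P a" shows "fpoly (qmap T2 a) = 0"
proof -
  have h: "\<And>e. a e nT = a e nG" using assms by (simp add: params_ok_def)
  show ?thesis by (simp add: fpoly_def qmap_def p2 gsum_def lv ar h add.assoc[symmetric])
qed

definition a0 :: "nat set \<Rightarrow> grp \<Rightarrow> complex" where
  "a0 e g = (if g = nA then 2 else 1)"

lemma a0_ok: "params_ok M a0"
  by (cases M) (auto simp: params_ok_def a0_def dist)

lemma fnz3: "fpoly (qmap T3 a0) \<noteq> 0"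
  by (simp add: fpoly_def qmap_def p3 gsum_def lv ar add.assoc[symmetric] a0_def dist)

lemma fnz4: "fpoly (qmap T4 a0) \<noteq> 0"
  by (simp add: fpoly_def qmap_def p4 gsum_def lv ar add.assoc[symmetric] a0_def dist)


lemma zcl_van: "p \<in> vanish_ideal S \<Longrightarrow> x \<in> zcl S \<Longrightarrow> p x = 0"
  unfolding zcl_def by auto

lemma sub_zcl: "S \<subseteq> zcl S"
  unfolding zcl_def vanish_ideal_def by auto

lemma van_zcl: "p \<in> vanish_ideal S \<Longrightarrow> p \<in> vanish_ideal (zcl S)"
  unfolding vanish_ideal_def zcl_def by auto

lemma fpoly_pf: "fpoly \<in> polyfun"
proof -
  have v: "\<And>w. length w = 6 \<Longrightarrow> (\<lambda>x. x w) \<in> polyfun" by (rule pf_var)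
  have neg: "\<And>w. length w = 6 \<Longrightarrow> (\<lambda>x. (-1) * x w) \<in> polyfun"
    by (rule pf_mult[OF pf_const v])
  have "(\<lambda>x. ((x [nG,nG,nG,nG,nG,nG] + x [nG,nT,nT,nT,nT,nG]) + (-1) * x [nG,nT,nG,nG,nT,nG])
        + (-1) * x [nG,nG,nT,nT,nG,nG]) \<in> polyfun"
    by (rule pf_add[OF pf_add[OF pf_add[OF v v] neg] neg]) simp_all
  moreover have "(\<lambda>x. ((x [nG,nG,nG,nG,nG,nG] + x [nG,nT,nT,nT,nT,nG]) + (-1) * x [nG,nT,nG,nG,nT,nG])
        + (-1) * x [nG,nG,nT,nT,nG,nG]) = fpoly"
    by (rule ext) (simp add: fpoly_def)
  ultimately show ?thesis by simp
qed

lemma fpoly_lin: "fpoly (\<lambda>w. x w + y w) = fpoly x + fpoly y"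
  by (simp add: fpoly_def)

lemma ok_K2P: "M \<in> {JC, K2P} \<Longrightarrow> params_ok M a \<Longrightarrow> params_ok K2P a"
  unfolding params_ok_def by (cases M) auto

lemma fV: assumes "M \<in> {JC, K2P}" "T \<in> {T1, T2}" shows "fpoly \<in> vanish_ideal (V M T)"
proof -
  have "\<forall>x\<in>param_image M T. fpoly x = 0"
  proof
    fix x assume "x \<in> param_image M T"
    then obtain a where x: "x = qmap T a" and ok: "params_ok M a"
      unfolding param_image_def by blast
    have ok2: "params_ok K2P a" using ok_K2P[OF assms(1) ok] .
    show "fpoly x = 0"
    proof (cases "T = T1")
      case True then show ?thesis using x fvan1[OF ok2] by simp
    next
      case False then have "T = T2" using assms(2) by simp
      then show ?thesis using x fvan2[OF ok2] by simp
    qed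
  qed
  then have "fpoly \<in> vanish_ideal (param_image M T)"
    unfolding vanish_ideal_def using fpoly_pf by blast
  then show ?thesis unfolding V_def by (rule van_zcl)
qed

lemma fJ: assumes "M \<in> {JC, K2P}" shows "fpoly \<in> vanish_ideal (join (V M T1) (V M T2))"
proof -
  have a: "\<And>x. x \<in> V M T1 \<Longrightarrow> fpoly x = 0" using fV[OF assms, of T1] unfolding vanish_ideal_def by blast
  have b: "\<And>x. x \<in> V M T2 \<Longrightarrow> fpoly x = 0" using fV[OF assms, of T2] unfolding vanish_ideal_def by blast
  have "\<forall>z\<in>{(\<lambda>w. x w + y w) | x y. x \<in> V M T1 \<and> y \<in> V M T2}. fpoly z = 0"
  proof
    fix z assume "z \<in> {(\<lambda>w. x w + y w) | x y. x \<in> V M T1 \<and> y \<in> V M T2}"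
    then obtain x y where z: "z = (\<lambda>w. x w + y w)" and xy: "x \<in> V M T1" "y \<in> V M T2" by blast
    show "fpoly z = 0" unfolding z fpoly_lin using a[OF xy(1)] b[OF xy(2)] by simp
  qed
  then have "fpoly \<in> vanish_ideal {(\<lambda>w. x w + y w) | x y. x \<in> V M T1 \<and> y \<in> V M T2}"
    unfolding vanish_ideal_def using fpoly_pf by blast
  then show ?thesis unfolding join_def by (rule van_zcl)
qed

lemma inV: "qmap T a0 \<in> V M T"
proof -
  have "qmap T a0 \<in> param_image M T" unfolding param_image_def using a0_ok by blast
  then show ?thesis unfolding V_def using sub_zcl by blast
qed

theorem lemma5:
  shows "\<forall>M \<in> {JC, K2P}.
           fpoly \<in> vanish_ideal (join (V M T1) (V M T2)) \<and>
           (\<forall>Ti \<in> {T3, T4}. fpoly \<notin> vanish_ideal (V M Ti) \<and>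
                             \<not> (V M Ti \<subseteq> join (V M T1) (V M T2)))"
proof (intro ballI)
  fix M assume M: "M \<in> {JC, K2P}"
  show "fpoly \<in> vanish_ideal (join (V M T1) (V M T2)) \<and>
           (\<forall>Ti \<in> {T3, T4}. fpoly \<notin> vanish_ideal (V M Ti) \<and>
                             \<not> (V M Ti \<subseteq> join (V M T1) (V M T2)))"
  proof (intro conjI ballI)
    show "fpoly \<in> vanish_ideal (join (V M T1) (V M T2))" using fJ[OF M] .
  next
    fix Ti assume Ti: "Ti \<in> {T3, T4}"
    have nz: "fpoly (qmap Ti a0) \<noteq> 0" using Ti fnz3 fnz4 by auto
    show "fpoly \<notin> vanish_ideal (V M Ti)"
    proof
      assume "fpoly \<in> vanish_ideal (V M Ti)"
      then have "fpoly (qmap Ti a0) = 0" using inV unfolding vanish_ideal_def by blast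
      then show False using nz by simp
    qed
    show "\<not> (V M Ti \<subseteq> join (V M T1) (V M T2))"
    proof
      assume "V M Ti \<subseteq> join (V M T1) (V M T2)"
      then have "qmap Ti a0 \<in> join (V M T1) (V M T2)" using inV by blast
      then have "fpoly (qmap Ti a0) = 0" using fJ[OF M] unfolding vanish_ideal_def by blast
      then show False using nz by simp
    qed
  qed
qed

end
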